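(* Let $G$ be a graph with vertex set $[n]$ and let $P$ be a monomial in $\mathcal E_G$. Then $P$ is simple if and only if $P$ has no repeated variables and $\operatorname{supp}(P)$ has no cycles. Moreover, if $P$ is simple, then $\Pi(P)$ is the set partition of $[n]$ given by the cycles of $\sigma_P$.
   Context: The Fomin–Kirillov algebra $\mathcal E_n$ is the quadratic $\mathbf Q$-algebra with generators $x_{ij}=-x_{ji}$ for distinct $i,j\in[n]$, subject to the relations: $x_{ij}^2=0$ for distinct $i,j$; $x_{ij}x_{kl}=x_{kl}x_{ij}$ for distinct $i,j,k,l$; and $x_{ij}x_{jk}+x_{jk}x_{ki}+x_{ki}x_{ij}=0$ for distinct $i,j,k$. For a graph $G$ on vertex set $[n]$, $\mathcal E_G$ is the subalgebra of $\mathcal E_n$ generated by the $x_{ij}$ with $\overline{ij}$ an edge of $G$. A monomial is a product $P=x_{i_1j_1}\cdots x_{i_dj_d}$ of generators (with edges in $G$); its degree is $d(P)=d$; its $S_n$-degree is $\sigma_P=(i_1\;j_1)\cdots(i_d\;j_d)\in S_n$; $\operatorname{supp}(P)$ is the subgraph of $G$ (on vertex set $[n]$) whose edges are the $\overline{ij}$ with $x_{ij}$ appearing in $P$; and $\Pi(P)$ is the set partition of $[n]$ into the vertex sets of the connected components of $\operatorname{supp}(P)$. A monomial $P$ is called simple if $\sigma_P$ has exactly $n-d(P)$ cycles (counting fixed points). *)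

theory Defs
  imports "HOL-Combinatorics.Combinatorics"
begin

definition is_graph :: "nat \<Rightarrow> nat set set \<Rightarrow> bool" where
  "is_graph n G \<longleftrightarrow> (\<forall>e\<in>G. \<exists>i j. e = {i, j} \<and> i \<noteq> j \<and> i \<in> {1..n} \<and> j \<in> {1..n})"

text \<open>A monomial x_{i1 j1} ... x_{id jd} in E_G, recorded as the word of its index pairs.\<close>
definition is_monomial :: "nat \<Rightarrow> nat set set \<Rightarrow> (nat \<times> nat) list \<Rightarrow> bool" where
  "is_monomial n G P \<longleftrightarrow> (\<forall>(i, j)\<in>set P. i \<noteq> j \<and> i \<in> {1..n} \<and> j \<in> {1..n} \<and> {i, j} \<in> G)"

definition mdeg :: "(nat \<times> nat) list \<Rightarrow> nat" where
  "mdeg P = length P"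

definition sigma :: "(nat \<times> nat) list \<Rightarrow> nat \<Rightarrow> nat" where
  "sigma P = foldr (\<lambda>(i, j) f. transpose i j \<circ> f) P id"

definition perm_cycles :: "nat \<Rightarrow> (nat \<Rightarrow> nat) \<Rightarrow> nat set set" where
  "perm_cycles n s = (\<lambda>x. {y \<in> {1..n}. \<exists>k. (s ^^ k) x = y}) ` {1..n}"

definition simple_monomial :: "nat \<Rightarrow> (nat \<times> nat) list \<Rightarrow> bool" where
  "simple_monomial n P \<longleftrightarrow> int (card (perm_cycles n (sigma P))) = int n - int (mdeg P)"

definition no_repeated_vars :: "(nat \<times> nat) list \<Rightarrow> bool" where
  "no_repeated_vars P \<longleftrightarrow> distinct (map (\<lambda>(i, j). {i, j}) P)"

definition supp :: "(nat \<times> nat) list \<Rightarrow> nat set set" where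
  "supp P = (\<lambda>(i, j). {i, j}) ` set P"

definition has_cycle :: "nat set set \<Rightarrow> bool" where
  "has_cycle E \<longleftrightarrow> (\<exists>vs. length vs \<ge> 3 \<and> distinct vs \<and>
      (\<forall>k < length vs - 1. {vs ! k, vs ! Suc k} \<in> E) \<and> {last vs, hd vs} \<in> E)"

definition comp_partition :: "nat \<Rightarrow> nat set set \<Rightarrow> nat set set" where
  "comp_partition n E = (\<lambda>x. {y \<in> {1..n}. (x, y) \<in> ({(a, b). {a, b} \<in> E})\<^sup>*}) ` {1..n}"

definition Pi_part :: "nat \<Rightarrow> (nat \<times> nat) list \<Rightarrow> nat set set" where
  "Pi_part n P = comp_partition n (supp P)"

end

theory Submission
  imports Defs "HOL-Combinatorics.Orbits"
begin


lemma sigma_Cons[simp]: "sigma ((i,j)#P) = transpose i j \<circ> sigma P"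
  by (simp add: sigma_def)

lemma sigma_Nil[simp]: "sigma [] = id"
  by (simp add: sigma_def)

lemma sigma_permutes:
  assumes "\<forall>(i,j)\<in>set P. i \<in> {1..n} \<and> j \<in> {1..n}"
  shows "sigma P permutes {1..n}"
  using assms
proof (induction P)
  case Nil then show ?case by (simp only: sigma_Nil permutes_id)
next
  case (Cons p P)
  obtain i j where p: "p = (i,j)" by fastforce
  from Cons p have h: "sigma P permutes {1..n}" "i \<in> {1..n}" "j \<in> {1..n}" by auto
  show ?case unfolding p sigma_Cons by (rule permutes_compose[OF h(1) permutes_swap_id[OF h(2,3)]])
qed

lemma perm_cycles_orbit:
  assumes "s permutes {1..n}"
  shows "perm_cycles n s = orbit s ` {1..n}"
proof -
  have perm: "permutation s" using assms permutation_permutes by blast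
  have "{y \<in> {1..n}. \<exists>k. (s ^^ k) x = y} = orbit s x" if "x \<in> {1..n}" for x
    using permutes_orbit_subset[OF assms that] orbit_altdef_permutation[OF perm, of x] by auto
  then show ?thesis unfolding perm_cycles_def by (auto simp: image_def)
qed

lemma orbit_same:
  assumes "permutation s" "y \<in> orbit s x" shows "orbit s y = orbit s x"
  by (metis assms cyclic_on_orbit' orbit_cyclic_eq3)

lemma merge_orbit_walk:
  assumes perm: "permutation s" and nj: "j \<notin> orbit s i"
  defines "t \<equiv> transpose i j \<circ> s"
  shows "i \<in> orbit t j \<and> orbit s j \<subseteq> orbit t j"
proof -
  have ii: "i \<in> orbit s i" by (rule permutation_self_in_orbit[OF perm])
  have jj: "j \<in> orbit s j" by (rule permutation_self_in_orbit[OF perm])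
  have ij: "i \<noteq> j" using nj ii by blast
  have noti: "y \<noteq> i" if "y \<in> orbit s j" for y
  proof
    assume "y = i"
    then have "i \<in> orbit s j" using that by simp
    then have "orbit s i = orbit s j" by (rule orbit_same[OF perm])
    then show False using nj jj by simp
  qed
  have tperm: "permutation t" unfolding t_def
    by (simp add: perm permutation_compose permutation_swap_id)
  have claim: "(y \<noteq> j \<longrightarrow> y \<in> orbit t j) \<and> (y = j \<longrightarrow> i \<in> orbit t j)"
    if "y \<in> orbit s j" for y
    using that
  proof induction
    case base
    show ?case
    proof (cases "s j = j")
      case True
      then have "t j = i" by (simp add: t_def)
      then show ?thesis using True orbit.base[of t j] by simp
    next
      case False
      then have "t j = s j" using noti[OF orbit.base] by (simp add: t_def transpose_def)
      then show ?thesis using False orbit.base[of t j] by simp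
    qed
  next
    case (step y)
    have sy: "s y \<in> orbit s j" by (rule orbit.step[OF step.hyps])
    show ?case
    proof (cases "y = j")
      case True
      show ?thesis
      proof (cases "s j = j")
        case False
        then have "t j = s j" using noti[OF orbit.base] by (simp add: t_def transpose_def)
        then show ?thesis using False True orbit.base[of t j] step.IH by simp
      qed (use True step.IH in simp)
    next
      case False
      then have yt: "y \<in> orbit t j" using step.IH by blast
      show ?thesis
      proof (cases "s y = j")
        case True
        then have "t y = i" by (simp add: t_def)
        then show ?thesis using True orbit.step[OF yt] by simp
      next
        case F2: False
        then have "t y = s y" using noti[OF sy] by (simp add: t_def transpose_def)
        then show ?thesis using F2 orbit.step[OF yt] by simp
      qed
    qed
  qed
  have "i \<in> orbit t j" using claim[OF jj] by simp
  moreover have "orbit s j \<subseteq> orbit t j"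
  proof
    fix y assume y: "y \<in> orbit s j"
    show "y \<in> orbit t j"
    proof (cases "y = j")
      case True then show ?thesis using permutation_self_in_orbit[OF tperm, of j] by simp
    next
      case False then show ?thesis using claim[OF y] by simp
    qed
  qed
  ultimately show ?thesis by blast
qed

lemma merge_orbit:
  assumes perm: "permutation s" and nj: "j \<notin> orbit s i"
  shows "orbit (transpose i j \<circ> s) x =
     (if x \<in> orbit s i \<union> orbit s j then orbit s i \<union> orbit s j else orbit s x)"
proof -
  define t where "t = transpose i j \<circ> s"
  have ii: "i \<in> orbit s i" by (rule permutation_self_in_orbit[OF perm])
  have jj: "j \<in> orbit s j" by (rule permutation_self_in_orbit[OF perm])
  have tperm: "permutation t" unfolding t_def
    by (simp add: perm permutation_compose permutation_swap_id)
  have ni: "i \<notin> orbit s j"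
  proof
    assume "i \<in> orbit s j"
    then have "orbit s i = orbit s j" by (rule orbit_same[OF perm])
    then show False using nj jj by simp
  qed
  have t': "t = transpose j i \<circ> s" unfolding t_def by (simp add: transpose_commute)
  have A: "i \<in> orbit t j \<and> orbit s j \<subseteq> orbit t j"
    using merge_orbit_walk[OF perm nj] t_def by simp
  have B: "j \<in> orbit t i \<and> orbit s i \<subseteq> orbit t i"
    using merge_orbit_walk[OF perm ni] t' by simp
  have eqij: "orbit t i = orbit t j" using A orbit_same[OF tperm] by blast
  have sub: "orbit t j \<subseteq> orbit s i \<union> orbit s j"
  proof
    fix y assume "y \<in> orbit t j"
    then show "y \<in> orbit s i \<union> orbit s j"
    proof induction
      case base
      have "s j \<in> orbit s j" by (rule orbit.base)
      then show ?case using ii jj by (auto simp: t_def transpose_def)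
    next
      case (step y)
      have "s y \<in> orbit s i \<union> orbit s j" using step.IH orbit.step[of y s i] orbit.step[of y s j] by blast
      then show ?case using ii jj by (auto simp: t_def transpose_def)
    qed
  qed
  have U: "orbit t j = orbit s i \<union> orbit s j" using sub A B eqij by blast
  show ?thesis
  proof (cases "x \<in> orbit s i \<union> orbit s j")
    case True
    then have "x \<in> orbit t j" using U by blast
    then have "orbit t x = orbit t j" by (rule orbit_same[OF tperm])
    then show ?thesis using U True by (simp add: t_def)
  next
    case False
    have xx: "x \<in> orbit s x" by (rule permutation_self_in_orbit[OF perm])
    have "t y = s y" if "y \<in> orbit s x" for y
    proof -
      have sy: "s y \<in> orbit s x" by (rule orbit.step[OF that])
      have "orbit s (s y) = orbit s x" by (rule orbit_same[OF perm sy])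
      then have "s y \<noteq> i" "s y \<noteq> j"
        using False xx ii jj by auto
      then show ?thesis by (simp add: t_def transpose_def)
    qed
    then have "orbit t x = orbit s x" by (rule orbit_cong[OF xx])
    then show ?thesis using False t_def by simp
  qed
qed


definition Rel :: "nat set set \<Rightarrow> (nat \<times> nat) set" where
  "Rel E = {(a, b). {a, b} \<in> E}"

definition cls :: "nat \<Rightarrow> nat set set \<Rightarrow> nat \<Rightarrow> nat set" where
  "cls n E x = {y \<in> {1..n}. (x, y) \<in> (Rel E)\<^sup>*}"

lemma comp_partition_cls: "comp_partition n E = cls n E ` {1..n}"
  unfolding comp_partition_def cls_def Rel_def by simp

lemma sym_Rel: "sym (Rel E)"
  unfolding Rel_def sym_def by (auto simp: insert_commute)

lemma rtr_sym: "(a, b) \<in> (Rel E)\<^sup>* \<Longrightarrow> (b, a) \<in> (Rel E)\<^sup>*"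
  using sym_rtrancl[OF sym_Rel] by (auto simp: sym_def)

lemma cls_self: "x \<in> {1..n} \<Longrightarrow> x \<in> cls n E x"
  by (simp add: cls_def)

lemma cls_sub: "cls n E x \<subseteq> {1..n}"
  by (auto simp: cls_def)

lemma cls_same:
  assumes "y \<in> cls n E x" shows "cls n E y = cls n E x"
proof -
  have xy: "(x, y) \<in> (Rel E)\<^sup>*" using assms by (simp add: cls_def)
  have yx: "(y, x) \<in> (Rel E)\<^sup>*" by (rule rtr_sym[OF xy])
  have "(y, z) \<in> (Rel E)\<^sup>* \<longleftrightarrow> (x, z) \<in> (Rel E)\<^sup>*" for z
    using rtrancl_trans[OF xy, of z] rtrancl_trans[OF yx, of z] by blast
  then show ?thesis unfolding cls_def by simp
qed

lemma Rel_insert: "Rel (insert {i, j} E) = Rel E \<union> {(i, j), (j, i)}"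
  unfolding Rel_def by (auto simp: doubleton_eq_iff)

lemma Rel_mono: "E \<subseteq> F \<Longrightarrow> Rel E \<subseteq> Rel F"
  unfolding Rel_def by auto

lemma rtr_insert:
  "(x, y) \<in> (Rel (insert {i, j} E))\<^sup>* \<longleftrightarrow>
     (x, y) \<in> (Rel E)\<^sup>* \<or> ((x, i) \<in> (Rel E)\<^sup>* \<and> (j, y) \<in> (Rel E)\<^sup>*)
       \<or> ((x, j) \<in> (Rel E)\<^sup>* \<and> (i, y) \<in> (Rel E)\<^sup>*)"
  (is "?L \<longleftrightarrow> ?R")
proof
  assume ?L
  then have "(x, y) \<in> (Rel E \<union> {(i, j), (j, i)})\<^sup>*" by (simp add: Rel_insert)
  then show ?R
  proof induction
    case base then show ?case by simp
  next
    case (step y z)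
    from step.hyps(2) consider "(y, z) \<in> Rel E" | "y = i" "z = j" | "y = j" "z = i" by blast
    then show ?case
    proof cases
      case 1 then show ?thesis using step.IH by (meson rtrancl.rtrancl_into_rtrancl)
    next
      case 2 then show ?thesis using step.IH by auto
    next
      case 3 then show ?thesis using step.IH by auto
    qed
  qed
next
  assume R: ?R
  have m: "(Rel E)\<^sup>* \<subseteq> (Rel (insert {i, j} E))\<^sup>*"
    by (rule rtrancl_mono) (rule Rel_mono, blast)
  have ij: "(i, j) \<in> (Rel (insert {i, j} E))\<^sup>*" "(j, i) \<in> (Rel (insert {i, j} E))\<^sup>*"
    by (auto simp: Rel_insert)
  from R show ?L using m ij by (meson rtrancl_trans subsetD)
qed

lemma cls_insert:
  assumes "i \<in> {1..n}" "j \<in> {1..n}" "x \<in> {1..n}"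
  shows "cls n (insert {i, j} E) x =
    (if x \<in> cls n E i \<union> cls n E j then cls n E i \<union> cls n E j else cls n E x)"
  using assms unfolding cls_def rtr_insert by (auto dest: rtr_sym intro: rtrancl_trans)

lemma merge_card:
  assumes fin: "finite S"
    and self: "\<And>x. x \<in> S \<Longrightarrow> x \<in> c x"
    and same: "\<And>x y. x \<in> S \<Longrightarrow> y \<in> c x \<Longrightarrow> c y = c x"
    and ab: "a \<in> S" "b \<in> S" "c a \<noteq> c b"
    and c': "\<And>x. x \<in> S \<Longrightarrow> c' x = (if x \<in> c a \<union> c b then c a \<union> c b else c x)"
  shows "card (c ` S) = card (c' ` S) + 1"
proof -
  have eq: "c' ` S = insert (c a \<union> c b) (c ` S - {c a, c b})"
  proof (intro set_eqI iffI)
    fix z assume "z \<in> c' ` S"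
    then obtain x where x: "x \<in> S" "z = c' x" by blast
    show "z \<in> insert (c a \<union> c b) (c ` S - {c a, c b})"
    proof (cases "x \<in> c a \<union> c b")
      case True then show ?thesis using x c' by simp
    next
      case False
      then have "c x \<noteq> c a" "c x \<noteq> c b" using self[OF x(1)] by auto
      then show ?thesis using x c' False by auto
    qed
  next
    fix z assume z: "z \<in> insert (c a \<union> c b) (c ` S - {c a, c b})"
    show "z \<in> c' ` S"
    proof (cases "z = c a \<union> c b")
      case True
      then have "z = c' a" using c'[OF ab(1)] self[OF ab(1)] by simp
      then show ?thesis using ab(1) by blast
    next
      case False
      then obtain x where x: "x \<in> S" "z = c x" "c x \<noteq> c a" "c x \<noteq> c b" using z by auto
      have "x \<notin> c a \<union> c b" using same[OF ab(1), of x] same[OF ab(2), of x] x by auto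
      then show ?thesis using x c' by (metis image_eqI)
    qed
  qed
  have nin: "c a \<union> c b \<notin> c ` S - {c a, c b}"
  proof
    assume "c a \<union> c b \<in> c ` S - {c a, c b}"
    then obtain x where x: "x \<in> S" "c x = c a \<union> c b" by auto
    then have "c a = c x" using same[OF x(1), of a] self[OF ab(1)] by auto
    moreover have "c b = c x" using same[OF x(1), of b] self[OF ab(2)] x by auto
    ultimately show False using ab(3) by simp
  qed
  have fin2: "finite (c ` S)" using fin by simp
  have in2: "c a \<in> c ` S" "c b \<in> c ` S" using ab by auto
  have "card (c' ` S) = card (c ` S - {c a, c b}) + 1"
    unfolding eq using nin fin2 by simp
  also have "card (c ` S - {c a, c b}) = card (c ` S) - 2"
    using in2 ab(3) fin2 by (simp add: card_Diff_subset)
  also have "card (c ` S) \<ge> 2"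
  proof -
    have "{c a, c b} \<subseteq> c ` S" using in2 by auto
    then have "card {c a, c b} \<le> card (c ` S)" using fin2 card_mono by blast
    then show ?thesis using ab(3) by simp
  qed
  ultimately show ?thesis by linarith
qed


lemma supp_Cons[simp]: "supp ((i,j)#P) = insert {i, j} (supp P)"
  by (simp add: supp_def)

lemma supp_Nil[simp]: "supp [] = {}"
  by (simp add: supp_def)

lemma step_rel: "{i, j} \<in> E \<Longrightarrow> (y, transpose i j y) \<in> (Rel E)\<^sup>*"
  unfolding Rel_def transpose_def by (auto simp: insert_commute)

lemma refine_step: "(x, sigma P x) \<in> (Rel (supp P))\<^sup>*"
proof (induction P arbitrary: x)
  case Nil then show ?case by simp
next
  case (Cons p P)
  obtain i j where p: "p = (i, j)" by fastforce
  have m: "(Rel (supp P))\<^sup>* \<subseteq> (Rel (supp (p#P)))\<^sup>*"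
    by (rule rtrancl_mono) (rule Rel_mono, auto simp: p)
  have "(sigma P x, transpose i j (sigma P x)) \<in> (Rel (supp (p#P)))\<^sup>*"
    by (rule step_rel) (simp add: p)
  then show ?case using Cons.IH[of x] m p by (auto intro: rtrancl_trans)
qed

lemma refine_pow: "(x, (sigma P ^^ k) x) \<in> (Rel (supp P))\<^sup>*"
proof (induction k)
  case 0 then show ?case by simp
next
  case (Suc k)
  then show ?case using refine_step[where P=P and x="(sigma P ^^ k) x"] by (auto intro: rtrancl_trans)
qed

lemma orbit_sub_cls:
  assumes "sigma P permutes {1..n}" "x \<in> {1..n}"
  shows "orbit (sigma P) x \<subseteq> cls n (supp P) x"
proof -
  have perm: "permutation (sigma P)" using assms(1) permutation_permutes by blast
  show ?thesis
    using permutes_orbit_subset[OF assms] orbit_altdef_permutation[OF perm, of x] refine_pow[where P=P and x=x]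
    unfolding cls_def by auto
qed

lemma card_le:
  assumes "sigma P permutes {1..n}"
  shows "card (comp_partition n (supp P)) \<le> card (perm_cycles n (sigma P))"
proof -
  have perm: "permutation (sigma P)" using assms(1) permutation_permutes by blast
  define f where "f Ob = \<Union> (cls n (supp P) ` Ob)" for Ob
  have "f (orbit (sigma P) x) = cls n (supp P) x" if x: "x \<in> {1..n}" for x
  proof -
    have "cls n (supp P) y = cls n (supp P) x" if "y \<in> orbit (sigma P) x" for y
      using cls_same[OF subsetD[OF orbit_sub_cls[OF assms x] that]] .
    moreover have "x \<in> orbit (sigma P) x" by (rule permutation_self_in_orbit[OF perm])
    ultimately have "cls n (supp P) ` orbit (sigma P) x = {cls n (supp P) x}" by blast
    then show ?thesis unfolding f_def by simp
  qed
  then have "(f \<circ> orbit (sigma P)) ` {1..n} = cls n (supp P) ` {1..n}"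
    by (intro image_cong) auto
  then have "comp_partition n (supp P) = f ` perm_cycles n (sigma P)"
    unfolding comp_partition_cls perm_cycles_orbit[OF assms] image_comp by simp
  then show ?thesis
    by (simp add: card_image_le perm_cycles_orbit[OF assms])
qed

fun forest :: "(nat \<times> nat) list \<Rightarrow> bool" where
  "forest [] = True"
| "forest ((i, j) # P) = (forest P \<and> (i, j) \<notin> (Rel (supp P))\<^sup>*)"

lemma cls_empty: "x \<in> {1..n} \<Longrightarrow> cls n {} x = {x}"
  unfolding cls_def Rel_def by auto

lemma count:
  assumes "\<forall>(i,j)\<in>set P. i \<in> {1..n} \<and> j \<in> {1..n}"
  shows "int (card (comp_partition n (supp P))) \<ge> int n - int (length P) \<and>
         (int (card (comp_partition n (supp P))) = int n - int (length P) \<longleftrightarrow> forest P)"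
  using assms
proof (induction P)
  case Nil
  have "comp_partition n (supp []) = (\<lambda>x. {x}) ` {1..n}"
    unfolding comp_partition_cls using cls_empty by auto
  then have "card (comp_partition n (supp [])) = n" by (simp add: card_image)
  then show ?case by simp
next
  case (Cons p P)
  obtain i j where p: "p = (i, j)" by fastforce
  from Cons.prems p have ij: "i \<in> {1..n}" "j \<in> {1..n}" and pr: "\<forall>(i,j)\<in>set P. i \<in> {1..n} \<and> j \<in> {1..n}"
    by auto
  note IH = Cons.IH[OF pr]
  show ?case
  proof (cases "(i, j) \<in> (Rel (supp P))\<^sup>*")
    case True
    then have "j \<in> cls n (supp P) i" using ij unfolding cls_def by simp
    then have eqc: "cls n (supp P) j = cls n (supp P) i" by (rule cls_same)
    have "cls n (supp (p#P)) x = cls n (supp P) x" if x: "x \<in> {1..n}" for x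
    proof -
      have e: "cls n (supp (p#P)) x = (if x \<in> cls n (supp P) i \<union> cls n (supp P) j
          then cls n (supp P) i \<union> cls n (supp P) j else cls n (supp P) x)"
        using cls_insert[OF ij x, of "supp P"] p by simp
      show ?thesis
      proof (cases "x \<in> cls n (supp P) i")
        case True
        then have "cls n (supp P) x = cls n (supp P) i" by (rule cls_same)
        with e eqc True show ?thesis by simp
      next
        case False
        with e eqc show ?thesis by simp
      qed
    qed
    then have "comp_partition n (supp (p#P)) = comp_partition n (supp P)"
      unfolding comp_partition_cls by auto
    then show ?thesis using IH True p by simp
  next
    case False
    then have ne: "cls n (supp P) i \<noteq> cls n (supp P) j"
      using cls_self[OF ij(2), of "supp P"] unfolding cls_def by auto
    have "card (cls n (supp P) ` {1..n}) = card (cls n (supp (p#P)) ` {1..n}) + 1"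
    proof (rule merge_card[OF _ _ _ ij ne])
      show "finite {1..n}" by simp
      show "\<And>x. x \<in> {1..n} \<Longrightarrow> x \<in> cls n (supp P) x" by (rule cls_self)
      show "\<And>x y. x \<in> {1..n} \<Longrightarrow> y \<in> cls n (supp P) x \<Longrightarrow> cls n (supp P) y = cls n (supp P) x"
        using cls_same by blast
      show "\<And>x. x \<in> {1..n} \<Longrightarrow> cls n (supp (p#P)) x = (if x \<in> cls n (supp P) i \<union> cls n (supp P) j
          then cls n (supp P) i \<union> cls n (supp P) j else cls n (supp P) x)"
        using cls_insert[OF ij, of _ "supp P"] p by simp
    qed
    then have h: "int (card (comp_partition n (supp P))) = int (card (comp_partition n (supp (p#P)))) + 1"
      unfolding comp_partition_cls by simp
    have fe: "forest (p#P) = forest P" using False p by simp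
    have len: "int (length (p#P)) = int (length P) + 1" by simp
    have "int (card (comp_partition n (supp (p#P)))) = int n - int (length (p#P))
          \<longleftrightarrow> int (card (comp_partition n (supp P))) = int n - int (length P)"
      using h len by linarith
    then show ?thesis using IH h len fe by linarith
  qed
qed

lemma forest_orbits:
  assumes "\<forall>(i,j)\<in>set P. i \<in> {1..n} \<and> j \<in> {1..n}" "forest P"
  shows "\<forall>x\<in>{1..n}. orbit (sigma P) x = cls n (supp P) x"
  using assms
proof (induction P)
  case Nil
  have "orbit id x = {x}" for x :: nat by (simp add: orbit_eq_singleton_iff)
  then show ?case using cls_empty by (simp add: id_def)
next
  case (Cons p P)
  obtain i j where p: "p = (i, j)" by fastforce
  from Cons.prems p have ij: "i \<in> {1..n}" "j \<in> {1..n}" and pr: "\<forall>(i,j)\<in>set P. i \<in> {1..n} \<and> j \<in> {1..n}"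
    and fP: "forest P" and nc: "(i, j) \<notin> (Rel (supp P))\<^sup>*"
    by auto
  note IH = Cons.IH[OF pr fP]
  have sp: "sigma P permutes {1..n}" using sigma_permutes[OF pr] .
  have perm: "permutation (sigma P)" using sp permutation_permutes by blast
  have nj: "j \<notin> orbit (sigma P) i" using IH ij nc unfolding cls_def by auto
  show ?case
  proof
    fix x assume x: "x \<in> {1..n}"
    show "orbit (sigma (p#P)) x = cls n (supp (p#P)) x"
      using merge_orbit[OF perm nj, of x] cls_insert[OF ij x, of "supp P"] IH ij x p by simp
  qed
qed


lemma path_rtr:
  assumes "\<forall>l. a \<le> l \<and> l < b \<longrightarrow> {vs!l, vs!Suc l} \<in> E" "a \<le> b"
  shows "(vs!a, vs!b) \<in> (Rel E)\<^sup>*"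
  using assms
proof (induction b)
  case 0 then show ?case by simp
next
  case (Suc b)
  show ?case
  proof (cases "a = Suc b")
    case True then show ?thesis by simp
  next
    case False
    then have "(vs!a, vs!b) \<in> (Rel E)\<^sup>*" using Suc by auto
    moreover have "(vs!b, vs!Suc b) \<in> Rel E" using Suc.prems False unfolding Rel_def by auto
    ultimately show ?thesis by auto
  qed
qed

lemma pair_sym: "{i, j} = {a, b} \<Longrightarrow> (a, b) \<in> (Rel E)\<^sup>* \<Longrightarrow> (i, j) \<in> (Rel E)\<^sup>*"
  by (auto simp: doubleton_eq_iff dest: rtr_sym)

lemma has_cycle_mono: "E \<subseteq> F \<Longrightarrow> has_cycle E \<Longrightarrow> has_cycle F"
  unfolding has_cycle_def by blast

lemma cycle_insert:
  assumes "has_cycle (insert {i, j} E)"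
  shows "has_cycle E \<or> (i, j) \<in> (Rel E)\<^sup>*"
proof -
  obtain vs where L3: "length vs \<ge> 3" and dist: "distinct vs"
    and ed: "\<forall>k < length vs - 1. {vs ! k, vs ! Suc k} \<in> insert {i, j} E"
    and cl: "{last vs, hd vs} \<in> insert {i, j} E"
    using assms unfolding has_cycle_def by blast
  define L where "L = length vs"
  have ne: "vs \<noteq> []" using L3 by auto
  have lastv: "last vs = vs ! (L - 1)" unfolding L_def by (rule last_conv_nth[OF ne])
  have hdv: "hd vs = vs ! 0" by (rule hd_conv_nth[OF ne])
  have nth_inj: "vs ! a = vs ! b \<longleftrightarrow> a = b" if "a < L" "b < L" for a b
    using dist that nth_eq_iff_index_eq unfolding L_def by blast
  have ed_inj: "l = k" if "l < L - 1" "k < L - 1" "{vs!l, vs!Suc l} = {vs!k, vs!Suc k}" for l k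
  proof -
    have b: "l < L" "Suc l < L" "k < L" "Suc k < L" using that(1,2) by auto
    have "vs!l = vs!k \<or> (vs!l = vs!Suc k \<and> vs!Suc l = vs!k)"
      using that(3) by (auto simp: doubleton_eq_iff)
    then show ?thesis
    proof
      assume "vs!l = vs!k" then show ?thesis using nth_inj[OF b(1) b(3)] by simp
    next
      assume h: "vs!l = vs!Suc k \<and> vs!Suc l = vs!k"
      have "l = Suc k" using h nth_inj[OF b(1) b(4)] by simp
      moreover have "Suc l = k" using h nth_inj[OF b(2) b(3)] by simp
      ultimately show ?thesis by simp
    qed
  qed
  have ed_cl: "{vs!l, vs!Suc l} \<noteq> {last vs, hd vs}" if "l < L - 1" for l
  proof
    assume eq: "{vs!l, vs!Suc l} = {last vs, hd vs}"
    have b: "l < L" "Suc l < L" "0 < L" "L - 1 < L" using that L3 unfolding L_def by auto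
    from eq have "vs!l = vs!(L-1) \<or> (vs!l = vs!0 \<and> vs!Suc l = vs!(L-1))"
      using lastv hdv by (auto simp: doubleton_eq_iff)
    then show False
    proof
      assume "vs!l = vs!(L-1)"
      then have "l = L - 1" using nth_inj[OF b(1) b(4)] by simp
      then show False using that by simp
    next
      assume h: "vs!l = vs!0 \<and> vs!Suc l = vs!(L-1)"
      have "l = 0" using h nth_inj[OF b(1) b(3)] by simp
      moreover have "Suc l = L - 1" using h nth_inj[OF b(2) b(4)] by simp
      ultimately show False using L3 unfolding L_def by simp
    qed
  qed
  show ?thesis
  proof (cases "(\<forall>k < L - 1. {vs ! k, vs ! Suc k} \<in> E) \<and> {last vs, hd vs} \<in> E")
    case True
    then have "has_cycle E" unfolding has_cycle_def L_def using L3 dist by blast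
    then show ?thesis by simp
  next
    case False
    then consider "{last vs, hd vs} \<notin> E" | k where "k < L - 1" "{vs ! k, vs ! Suc k} \<notin> E" by blast
    then show ?thesis
    proof cases
      case 1
      then have e: "{last vs, hd vs} = {i, j}" using cl by auto
      have "{vs!l, vs!Suc l} \<in> E" if "l < L - 1" for l
        using ed ed_cl[OF that] e that unfolding L_def by auto
      then have "(vs!0, vs!(L-1)) \<in> (Rel E)\<^sup>*" by (intro path_rtr) auto
      then show ?thesis using e lastv hdv pair_sym by (metis insert_commute)
    next
      case (2 k)
      then have e: "{vs ! k, vs ! Suc k} = {i, j}" using ed unfolding L_def by auto
      have oth: "{vs!l, vs!Suc l} \<in> E" if "l < L - 1" "l \<noteq> k" for l
        using ed ed_inj[OF that(1) 2(1)] e that unfolding L_def by auto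
      have clE: "{last vs, hd vs} \<in> E" using cl ed_cl[OF 2(1)] e by auto
      have p1: "(vs!0, vs!k) \<in> (Rel E)\<^sup>*" using oth 2(1) by (intro path_rtr) auto
      have p2: "(vs!Suc k, vs!(L-1)) \<in> (Rel E)\<^sup>*" using oth 2(1) by (intro path_rtr) auto
      have p3: "(vs!(L-1), vs!0) \<in> Rel E" using clE lastv hdv unfolding Rel_def by simp
      have "(vs!Suc k, vs!k) \<in> (Rel E)\<^sup>*" using p1 p2 p3 by (meson rtrancl_into_rtrancl rtrancl_trans)
      then show ?thesis using e pair_sym by (metis insert_commute)
    qed
  qed
qed

lemma dpath:
  assumes "(a, b) \<in> (Rel E)\<^sup>*"
  shows "\<exists>vs. vs \<noteq> [] \<and> distinct vs \<and> hd vs = a \<and> last vs = b \<and>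
           (\<forall>k < length vs - 1. {vs!k, vs!Suc k} \<in> E)"
  using assms
proof induction
  case base
  show ?case by (rule exI[of _ "[a]"]) simp
next
  case (step b c)
  then obtain vs where vs: "vs \<noteq> []" "distinct vs" "hd vs = a" "last vs = b"
    "\<forall>k < length vs - 1. {vs!k, vs!Suc k} \<in> E" by blast
  have bc: "{b, c} \<in> E" using step.hyps(2) unfolding Rel_def by simp
  show ?case
  proof (cases "c \<in> set vs")
    case True
    then obtain m where m: "m < length vs" "vs ! m = c" by (auto simp: in_set_conv_nth)
    define ws where "ws = take (Suc m) vs"
    have "ws \<noteq> []" "distinct ws" using vs m unfolding ws_def by auto
    moreover have "hd ws = a" using vs m unfolding ws_def by (simp add: hd_take)
    moreover have "last ws = c"
    proof -
      have ne: "ws \<noteq> []" using vs m unfolding ws_def by auto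
      have "last ws = ws ! (length ws - 1)" by (rule last_conv_nth[OF ne])
      also have "length ws = Suc m" using m unfolding ws_def by simp
      finally show ?thesis using m unfolding ws_def by simp
    qed
    moreover have "\<forall>k < length ws - 1. {ws!k, ws!Suc k} \<in> E"
      using vs(5) m unfolding ws_def by auto
    ultimately show ?thesis by blast
  next
    case False
    define ws where "ws = vs @ [c]"
    have "ws \<noteq> []" "distinct ws" using vs False unfolding ws_def by auto
    moreover have "hd ws = a" using vs unfolding ws_def by simp
    moreover have "last ws = c" unfolding ws_def by simp
    moreover have "\<forall>k < length ws - 1. {ws!k, ws!Suc k} \<in> E"
    proof (intro allI impI)
      fix k assume k: "k < length ws - 1"
      show "{ws!k, ws!Suc k} \<in> E"
      proof (cases "k < length vs - 1")
        case True then show ?thesis using vs(5) unfolding ws_def by (auto simp: nth_append)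
      next
        case F: False
        then have "k = length vs - 1" using k unfolding ws_def by simp
        then show ?thesis using vs(1,4) bc unfolding ws_def
          by (simp add: nth_append last_conv_nth)
      qed
    qed
    ultimately show ?thesis by blast
  qed
qed

lemma no_rep_Cons: "no_repeated_vars ((i,j)#P) \<longleftrightarrow> {i, j} \<notin> supp P \<and> no_repeated_vars P"
  unfolding no_repeated_vars_def supp_def by auto

lemma forest_iff:
  assumes "\<forall>(i,j)\<in>set P. i \<noteq> j"
  shows "forest P \<longleftrightarrow> no_repeated_vars P \<and> \<not> has_cycle (supp P)"
  using assms
proof (induction P)
  case Nil
  then show ?case by (simp add: no_repeated_vars_def has_cycle_def)
next
  case (Cons p P)
  obtain i j where p: "p = (i, j)" by fastforce
  from Cons.prems p have ij: "i \<noteq> j" and pr: "\<forall>(i,j)\<in>set P. i \<noteq> j" by auto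
  note IH = Cons.IH[OF pr]
  show ?case
  proof
    assume f: "forest (p#P)"
    then have fP: "forest P" and nc: "(i, j) \<notin> (Rel (supp P))\<^sup>*" using p by auto
    have "{i, j} \<notin> supp P" using nc unfolding Rel_def by auto
    moreover have "\<not> has_cycle (supp (p#P))"
      using cycle_insert[of i j "supp P"] IH fP nc p by auto
    ultimately show "no_repeated_vars (p#P) \<and> \<not> has_cycle (supp (p#P))"
      using IH fP p no_rep_Cons by simp
  next
    assume a: "no_repeated_vars (p#P) \<and> \<not> has_cycle (supp (p#P))"
    then have nr: "{i, j} \<notin> supp P" "no_repeated_vars P" using p no_rep_Cons by auto
    have nhc: "\<not> has_cycle (supp P)" using a p has_cycle_mono[of "supp P" "supp (p#P)"] by auto
    have "(i, j) \<notin> (Rel (supp P))\<^sup>*"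
    proof
      assume "(i, j) \<in> (Rel (supp P))\<^sup>*"
      then obtain vs where vs: "vs \<noteq> []" "distinct vs" "hd vs = i" "last vs = j"
        "\<forall>k < length vs - 1. {vs!k, vs!Suc k} \<in> supp P" using dpath by blast
      have l2: "length vs \<ge> 2"
      proof (rule ccontr)
        assume nl: "\<not> length vs \<ge> 2"
        have "length vs \<noteq> 0" using vs(1) by simp
        then have "length vs = 1" using nl by linarith
        then have "hd vs = last vs" by (cases vs) auto
        then show False using vs ij by simp
      qed
      show False
      proof (cases "length vs = 2")
        case True
        then have "vs ! 0 = i" "vs ! 1 = j"
          using vs(3,4) hd_conv_nth[OF vs(1)] last_conv_nth[OF vs(1)] by auto
        moreover have "{vs!0, vs!Suc 0} \<in> supp P" using vs(5) True by simp
        ultimately show False using nr(1) by simp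
      next
        case False
        then have "has_cycle (supp (p#P))" unfolding has_cycle_def using l2 vs p
          by (intro exI[of _ vs]) (auto simp: insert_commute)
        then show False using a by simp
      qed
    qed
    then show "forest (p#P)" using IH nr nhc p by simp
  qed
qed


theorem proposition2p4:
  fixes n :: nat and G :: "nat set set" and P :: "(nat \<times> nat) list"
  assumes "is_graph n G" and "is_monomial n G P"
  shows "(simple_monomial n P \<longleftrightarrow> no_repeated_vars P \<and> \<not> has_cycle (supp P))
         \<and> (simple_monomial n P \<longrightarrow> Pi_part n P = perm_cycles n (sigma P))"
proof -
  have ent: "\<forall>(i,j)\<in>set P. i \<in> {1..n} \<and> j \<in> {1..n}"
    using assms(2) unfolding is_monomial_def by auto
  have neq: "\<forall>(i,j)\<in>set P. i \<noteq> j"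
    using assms(2) unfolding is_monomial_def by auto
  have sp: "sigma P permutes {1..n}" by (rule sigma_permutes[OF ent])
  have feq: "forest P \<Longrightarrow> perm_cycles n (sigma P) = comp_partition n (supp P)"
    using forest_orbits[OF ent] unfolding perm_cycles_orbit[OF sp] comp_partition_cls
    by (auto simp: image_def)
  note cnt = count[OF ent]
  have cle: "card (comp_partition n (supp P)) \<le> card (perm_cycles n (sigma P))"
    by (rule card_le[OF sp])
  have key: "simple_monomial n P \<longleftrightarrow> forest P"
  proof
    assume "simple_monomial n P"
    then have "int (card (perm_cycles n (sigma P))) = int n - int (length P)"
      unfolding simple_monomial_def mdeg_def .
    then have "int (card (comp_partition n (supp P))) = int n - int (length P)"
      using cnt cle by linarith
    then show "forest P" using cnt by simp
  next
    assume "forest P"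
    then show "simple_monomial n P"
      using feq cnt unfolding simple_monomial_def mdeg_def by simp
  qed
  show ?thesis using key forest_iff[OF neq] feq unfolding Pi_part_def by simp
qed

end
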